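(* Fix $K\ge1$, points $\mathbf{w}_1,\dots,\mathbf{w}_K\in\mathbb{R}^2$ and constants $H>0$, $\rho_0>0$, $\sigma^2>0$, $r^*>0$, $P_c\ge0$, $E_1,\dots,E_K>0$, $\tilde P_1,\dots,\tilde P_K>0$. For $\mathbf{q}\in\mathbb{R}^2$ write $d_k=\sqrt{\|\mathbf{q}-\mathbf{w}_k\|^2+H^2}$ and $h_k=\rho_0/d_k^2$. Problem (P1): minimize $\zeta$ over $(\zeta,\mathbf{q},\mathbf{p},\pi)$, $\zeta\in\mathbb{R}$, $\mathbf q\in\mathbb{R}^2$, $\mathbf p\in\mathbb{R}^K$, $\pi$ a permutation of $\{1,\dots,K\}$, subject to, for all $m$: $p_{\pi(m)}+P_c\le\zeta E_{\pi(m)}$; $0\le p_{\pi(m)}\le\tilde P_{\pi(m)}$; $\log_2\big(1+\frac{p_{\pi(m)}h_{\pi(m)}}{\sum_{n=m+1}^Kp_{\pi(n)}h_{\pi(n)}+\sigma^2}\big)\ge r^*$; and $d_{\pi(1)}\le\dots\le d_{\pi(K)}$. Problem (P2): minimize $\zeta$ over $(\zeta,\mathbf{q},\mathbf{p},\boldsymbol\alpha)$ with $\boldsymbol\alpha=(\alpha_{k,j})_{k,j=1}^K$, subject to, for all $k$: $p_k+P_c\le\zeta E_k$; $0\le p_k\le\tilde P_k$; $\log_2\big(1+\frac{p_kh_k}{\sum_{j\ne k}\alpha_{k,j}p_jh_j+\sigma^2}\big)\ge r^*$; for all $k\ne j$: $\alpha_{k,j}=0$ if $d_k>d_j$, $\alpha_{k,j}=1$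 if $d_k<d_j$, $\alpha_{k,j}\in\{0,1\}$ if $d_k=d_j$; $\alpha_{k,k}=0$; $\alpha_{k,j}+\alpha_{j,k}=1$ for $k\ne j$; $\alpha_{k,j}+\alpha_{j,i}-1\le\alpha_{k,i}$ for all $k,j,i$. Then the optimal values of (P1) and (P2) are equal.
   Context: (P1) models maximizing the minimum device lifetime $E_k/(p_k+P_c)$ (via $\zeta=1/\text{lifetime}$) in uplink NOMA to a UAV at horizontal position $\mathbf q$ and altitude $H$ with permutation decoding order $\pi$; (P2) is the same with binary decoding-order variables ($\alpha_{k,j}=1$: device $k$ decoded before device $j$). Optimal value means the infimum of $\zeta$ over the feasible set. *)

theory Defs
  imports "HOL-Analysis.Analysis" "HOL-Combinatorics.Permutations"
begin

text \<open>Devices are indexed by 0,...,K-1 (paper: 1,...,K).  Horizontal positions are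
  vectors in real^2.\<close>

definition dev_dist :: "real \<Rightarrow> (nat \<Rightarrow> real^2) \<Rightarrow> real^2 \<Rightarrow> nat \<Rightarrow> real" where
  "dev_dist H w q k = sqrt ((norm (q - w k))\<^sup>2 + H\<^sup>2)"

definition chan_gain :: "real \<Rightarrow> real \<Rightarrow> (nat \<Rightarrow> real^2) \<Rightarrow> real^2 \<Rightarrow> nat \<Rightarrow> real" where
  "chan_gain \<rho>0 H w q k = \<rho>0 / (dev_dist H w q k)\<^sup>2"

definition P1_feasible ::
  "nat \<Rightarrow> (nat \<Rightarrow> real^2) \<Rightarrow> real \<Rightarrow> real \<Rightarrow> real \<Rightarrow> real \<Rightarrow> real \<Rightarrow> (nat \<Rightarrow> real) \<Rightarrow> (nat \<Rightarrow> real)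
   \<Rightarrow> real \<Rightarrow> real^2 \<Rightarrow> (nat \<Rightarrow> real) \<Rightarrow> (nat \<Rightarrow> nat) \<Rightarrow> bool" where
  "P1_feasible K w H \<rho>0 \<sigma>2 rstar Pc E Pmax \<zeta> q p \<pi> \<longleftrightarrow>
     \<pi> permutes {..<K} \<and>
     (\<forall>m<K.
        p (\<pi> m) + Pc \<le> \<zeta> * E (\<pi> m) \<and>
        0 \<le> p (\<pi> m) \<and> p (\<pi> m) \<le> Pmax (\<pi> m) \<and>
        log 2 (1 + p (\<pi> m) * chan_gain \<rho>0 H w q (\<pi> m) /
                   ((\<Sum>n\<in>{m+1..<K}. p (\<pi> n) * chan_gain \<rho>0 H w q (\<pi> n)) + \<sigma>2)) \<ge> rstar) \<and>
     (\<forall>m. m + 1 < K \<longrightarrow> dev_dist H w q (\<pi> m) \<le> dev_dist H w q (\<pi> (m + 1)))"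

definition P2_feasible ::
  "nat \<Rightarrow> (nat \<Rightarrow> real^2) \<Rightarrow> real \<Rightarrow> real \<Rightarrow> real \<Rightarrow> real \<Rightarrow> real \<Rightarrow> (nat \<Rightarrow> real) \<Rightarrow> (nat \<Rightarrow> real)
   \<Rightarrow> real \<Rightarrow> real^2 \<Rightarrow> (nat \<Rightarrow> real) \<Rightarrow> (nat \<Rightarrow> nat \<Rightarrow> real) \<Rightarrow> bool" where
  "P2_feasible K w H \<rho>0 \<sigma>2 rstar Pc E Pmax \<zeta> q p \<alpha> \<longleftrightarrow>
     (\<forall>k<K.
        p k + Pc \<le> \<zeta> * E k \<and>
        0 \<le> p k \<and> p k \<le> Pmax k \<and>
        log 2 (1 + p k * chan_gain \<rho>0 H w q k /
                   ((\<Sum>j\<in>{..<K} - {k}. \<alpha> k j * p j * chan_gain \<rho>0 H w q j) + \<sigma>2)) \<ge> rstar) \<and>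
     (\<forall>k<K. \<forall>j<K. k \<noteq> j \<longrightarrow>
        (dev_dist H w q k > dev_dist H w q j \<longrightarrow> \<alpha> k j = 0) \<and>
        (dev_dist H w q k < dev_dist H w q j \<longrightarrow> \<alpha> k j = 1) \<and>
        (dev_dist H w q k = dev_dist H w q j \<longrightarrow> \<alpha> k j \<in> {0, 1})) \<and>
     (\<forall>k<K. \<alpha> k k = 0) \<and>
     (\<forall>k<K. \<forall>j<K. k \<noteq> j \<longrightarrow> \<alpha> k j + \<alpha> j k = 1) \<and>
     (\<forall>k<K. \<forall>j<K. \<forall>i<K. \<alpha> k j + \<alpha> j i - 1 \<le> \<alpha> k i)"

text \<open>Optimal values = infimum of \<zeta> over the feasible set, taken in the extended reals
  (so an infeasible problem has value +\<infinity>).\<close>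
definition P1_opt where
  "P1_opt K w H \<rho>0 \<sigma>2 rstar Pc E Pmax =
     (INF \<zeta> \<in> {\<zeta>. \<exists>q p \<pi>. P1_feasible K w H \<rho>0 \<sigma>2 rstar Pc E Pmax \<zeta> q p \<pi>}. ereal \<zeta>)"

definition P2_opt where
  "P2_opt K w H \<rho>0 \<sigma>2 rstar Pc E Pmax =
     (INF \<zeta> \<in> {\<zeta>. \<exists>q p \<alpha>. P2_feasible K w H \<rho>0 \<sigma>2 rstar Pc E Pmax \<zeta> q p \<alpha>}. ereal \<zeta>)"

end

theory Submission
  imports Defs
begin

lemma sum_perm_lemma:
  fixes f a :: "nat \<Rightarrow> real"
  assumes pi: "\<pi> permutes {..<K}" and m: "m < K"
    and a: "\<And>n. n < K \<Longrightarrow> n \<noteq> m \<Longrightarrow> a (\<pi> n) = (if m < n then 1 else 0)"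
  shows "(\<Sum>j\<in>{..<K} - {\<pi> m}. a j * f j) = (\<Sum>n\<in>{m+1..<K}. f (\<pi> n))"
proof -
  have inj: "inj_on \<pi> ({..<K} - {m})"
    using permutes_inj[OF pi] by (meson inj_on_subset subset_UNIV)
  have img: "\<pi> ` ({..<K} - {m}) = {..<K} - {\<pi> m}"
  proof -
    have "\<pi> ` {..<K} = {..<K}" using permutes_image[OF pi] .
    moreover have "inj \<pi>" using permutes_inj[OF pi] .
    ultimately show ?thesis by (simp add: image_set_diff)
  qed
  have "(\<Sum>j\<in>{..<K} - {\<pi> m}. a j * f j) = (\<Sum>n\<in>{..<K} - {m}. a (\<pi> n) * f (\<pi> n))"
    using sum.reindex[OF inj, of "\<lambda>j. a j * f j"] img by simp
  also have "\<dots> = (\<Sum>n\<in>{..<K} - {m}. if m < n then f (\<pi> n) else 0)"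
    by (rule sum.cong) (auto simp: a)
  also have "\<dots> = (\<Sum>n\<in>{n\<in>{..<K} - {m}. m < n}. f (\<pi> n))"
    by (rule sum.inter_filter[symmetric]) simp
  also have "{n\<in>{..<K} - {m}. m < n} = {m+1..<K}" by auto
  finally show ?thesis .
qed

lemma mono_chain:
  fixes d :: "nat \<Rightarrow> real" and \<pi> :: "nat \<Rightarrow> nat" and m n K :: nat
  assumes "\<forall>m. m + 1 < K \<longrightarrow> d (\<pi> m) \<le> d (\<pi> (m + 1))"
  shows "m \<le> n \<Longrightarrow> n < K \<Longrightarrow> d (\<pi> m) \<le> d (\<pi> n)"
proof (induction n)
  case 0 then show ?case by simp
next
  case (Suc n)
  show ?case
  proof (cases "m = Suc n")
    case False
    then have "m \<le> n" using Suc by simp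
    then have "d (\<pi> m) \<le> d (\<pi> n)" using Suc by simp
    also have "\<dots> \<le> d (\<pi> (Suc n))" using assms Suc by auto
    finally show ?thesis .
  qed simp
qed

lemma P1_to_P2:
  assumes "P1_feasible K w H \<rho>0 \<sigma>2 rstar Pc E Pmax \<zeta> q p \<pi>"
  shows "P2_feasible K w H \<rho>0 \<sigma>2 rstar Pc E Pmax \<zeta> q p
           (\<lambda>k j. if inv \<pi> k < inv \<pi> j then 1 else 0)"
proof -
  define d where "d = dev_dist H w q"
  define g where "g = chan_gain \<rho>0 H w q"
  define \<alpha> :: "nat \<Rightarrow> nat \<Rightarrow> real" where "\<alpha> = (\<lambda>k j. if inv \<pi> k < inv \<pi> j then 1 else 0)"
  have pi: "\<pi> permutes {..<K}" using assms unfolding P1_feasible_def by blast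
  have F: "\<forall>m<K.
        p (\<pi> m) + Pc \<le> \<zeta> * E (\<pi> m) \<and>
        0 \<le> p (\<pi> m) \<and> p (\<pi> m) \<le> Pmax (\<pi> m) \<and>
        log 2 (1 + p (\<pi> m) * g (\<pi> m) /
                   ((\<Sum>n\<in>{m+1..<K}. p (\<pi> n) * g (\<pi> n)) + \<sigma>2)) \<ge> rstar"
    using assms unfolding P1_feasible_def g_def by blast
  have D: "\<forall>m. m + 1 < K \<longrightarrow> d (\<pi> m) \<le> d (\<pi> (m + 1))"
    using assms unfolding P1_feasible_def d_def by blast
  have ipi: "inv \<pi> permutes {..<K}" using permutes_inv[OF pi] .
  have invK: "\<And>k. k < K \<Longrightarrow> inv \<pi> k < K"
    using permutes_in_image[OF ipi] by simp
  have piinv: "\<And>k. \<pi> (inv \<pi> k) = k" using permutes_inverses(1)[OF pi] .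
  have invpi: "\<And>k. inv \<pi> (\<pi> k) = k" using permutes_inverses(2)[OF pi] .
  have A1: "\<forall>k<K.
        p k + Pc \<le> \<zeta> * E k \<and>
        0 \<le> p k \<and> p k \<le> Pmax k \<and>
        log 2 (1 + p k * g k /
                   ((\<Sum>j\<in>{..<K} - {k}. \<alpha> k j * p j * g j) + \<sigma>2)) \<ge> rstar"
  proof (intro allI impI)
    fix k assume k: "k < K"
    define m where "m = inv \<pi> k"
    have m: "m < K" using invK[OF k] m_def by simp
    have km: "k = \<pi> m" using piinv m_def by simp
    have "(\<Sum>j\<in>{..<K} - {\<pi> m}. \<alpha> (\<pi> m) j * (p j * g j)) = (\<Sum>n\<in>{m+1..<K}. p (\<pi> n) * g (\<pi> n))"
      by (rule sum_perm_lemma[OF pi m]) (auto simp: \<alpha>_def invpi)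
    then show "p k + Pc \<le> \<zeta> * E k \<and>
        0 \<le> p k \<and> p k \<le> Pmax k \<and>
        log 2 (1 + p k * g k /
                   ((\<Sum>j\<in>{..<K} - {k}. \<alpha> k j * p j * g j) + \<sigma>2)) \<ge> rstar"
      using F[rule_format, OF m] km by (simp add: mult.assoc)
  qed
  have A2: "\<forall>k<K. \<forall>j<K. k \<noteq> j \<longrightarrow>
        (d k > d j \<longrightarrow> \<alpha> k j = 0) \<and>
        (d k < d j \<longrightarrow> \<alpha> k j = 1) \<and>
        (d k = d j \<longrightarrow> \<alpha> k j \<in> {0, 1})"
  proof (intro allI impI conjI)
    fix k j assume k: "k < K" and j: "j < K" and kj: "k \<noteq> j"
    have ne: "inv \<pi> k \<noteq> inv \<pi> j" using kj by (metis piinv)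
    {
      assume "d k > d j"
      show "\<alpha> k j = 0"
      proof (rule ccontr)
        assume "\<alpha> k j \<noteq> 0"
        then have "inv \<pi> k < inv \<pi> j" by (auto simp: \<alpha>_def split: if_splits)
        then have "d (\<pi> (inv \<pi> k)) \<le> d (\<pi> (inv \<pi> j))"
          using mono_chain[of K d \<pi>, OF D] invK[OF j] by simp
        with \<open>d k > d j\<close> show False by (simp add: piinv)
      qed
    }
    {
      assume "d k < d j"
      show "\<alpha> k j = 1"
      proof (rule ccontr)
        assume "\<alpha> k j \<noteq> 1"
        then have "inv \<pi> j < inv \<pi> k" using ne by (auto simp: \<alpha>_def split: if_splits)
        then have "d (\<pi> (inv \<pi> j)) \<le> d (\<pi> (inv \<pi> k))"
          using mono_chain[of K d \<pi>, OF D] invK[OF k] by simp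
        with \<open>d k < d j\<close> show False by (simp add: piinv)
      qed
    }
    show "d k = d j \<Longrightarrow> \<alpha> k j \<in> {0, 1}" by (simp add: \<alpha>_def)
  qed
  have A3: "\<forall>k<K. \<forall>j<K. k \<noteq> j \<longrightarrow> \<alpha> k j + \<alpha> j k = 1"
  proof (intro allI impI)
    fix k j assume "k < K" "j < K" "k \<noteq> j"
    then have ne: "inv \<pi> k \<noteq> inv \<pi> j" by (metis piinv)
    then show "\<alpha> k j + \<alpha> j k = 1" by (auto simp: \<alpha>_def)
  qed
  have A4: "\<forall>k<K. \<forall>j<K. \<forall>i<K. \<alpha> k j + \<alpha> j i - 1 \<le> \<alpha> k i"
    by (auto simp: \<alpha>_def)
  show ?thesis
    unfolding P2_feasible_def using A1 A2 A3 A4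
    by (simp add: \<alpha>_def d_def g_def)
qed

lemma order_perm:
  fixes \<alpha> :: "nat \<Rightarrow> nat \<Rightarrow> real"
  assumes b: "\<forall>k<K. \<forall>j<K. k \<noteq> j \<longrightarrow> \<alpha> k j \<in> {0,1}"
    and diag: "\<forall>k<K. \<alpha> k k = 0"
    and anti: "\<forall>k<K. \<forall>j<K. k \<noteq> j \<longrightarrow> \<alpha> k j + \<alpha> j k = 1"
    and tr: "\<forall>k<K. \<forall>j<K. \<forall>i<K. \<alpha> k j + \<alpha> j i - 1 \<le> \<alpha> k i"
  shows "\<exists>\<pi>. \<pi> permutes {..<K} \<and>
           (\<forall>m<K. \<forall>n<K. \<alpha> (\<pi> m) (\<pi> n) = 1 \<longleftrightarrow> m < n)"
proof -
  define P where "P k = {j\<in>{..<K}. \<alpha> j k = 1}" for k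
  define r where "r k = card (P k)" for k
  have lt: "r k < r j" if k: "k < K" and j: "j < K" and a: "\<alpha> k j = 1" for k j
  proof -
    have kj: "k \<noteq> j" using a diag k by auto
    have "P k \<subseteq> P j"
    proof
      fix i assume "i \<in> P k"
      then have i: "i < K" "\<alpha> i k = 1" by (auto simp: P_def)
      have "\<alpha> i k + \<alpha> k j - 1 \<le> \<alpha> i j" using tr i(1) k j by blast
      then have "\<alpha> i j \<ge> 1" using i(2) a by simp
      moreover have "i \<noteq> j"
      proof
        assume "i = j"
        then have "\<alpha> k j + \<alpha> j k = 1" using anti k j kj by blast
        then show False using a i \<open>i = j\<close> by simp
      qed
      moreover have "\<alpha> i j \<in> {0,1}" using b i(1) j \<open>i \<noteq> j\<close> by blast
      ultimately have "\<alpha> i j = 1" by auto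
      then show "i \<in> P j" using i by (auto simp: P_def)
    qed
    moreover have "k \<in> P j" "k \<notin> P k" using a k diag by (auto simp: P_def)
    ultimately have "P k \<subset> P j" by blast
    then show ?thesis unfolding r_def by (rule psubset_card_mono[rotated]) (simp add: P_def)
  qed
  have rK: "r k < K" if k: "k < K" for k
  proof -
    have "P k \<subseteq> {..<K} - {k}" using diag k by (auto simp: P_def)
    then have "r k \<le> card ({..<K} - {k})" unfolding r_def by (intro card_mono) auto
    then show ?thesis using k by simp
  qed
  have other: "\<alpha> j k = 1" if "k < K" "j < K" "k \<noteq> j" "\<alpha> k j \<noteq> 1" for k j
  proof -
    have "\<alpha> k j + \<alpha> j k = 1" "\<alpha> k j \<in> {0,1}" using anti b that by blast+
    then show ?thesis using that(4) by auto
  qed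
  have inj: "inj_on r {..<K}"
  proof (rule inj_onI)
    fix k j assume k: "k \<in> {..<K}" and j: "j \<in> {..<K}" and e: "r k = r j"
    show "k = j"
    proof (rule ccontr)
      assume "k \<noteq> j"
      then have "\<alpha> k j = 1 \<or> \<alpha> j k = 1" using other k j by auto
      then show False
      proof
        assume "\<alpha> k j = 1" then have "r k < r j" using lt k j by simp
        then show False using e by simp
      next
        assume "\<alpha> j k = 1" then have "r j < r k" using lt k j by simp
        then show False using e by simp
      qed
    qed
  qed
  have sub: "r ` {..<K} \<subseteq> {..<K}" using rK by auto
  have bij: "bij_betw r {..<K} {..<K}"
    by (rule bij_betw_imageI[OF inj], rule endo_inj_surj[OF finite_lessThan sub inj])
  define \<pi> where "\<pi> m = (if m < K then inv_into {..<K} r m else m)" for m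
  have bpi: "bij_betw \<pi> {..<K} {..<K}"
  proof -
    have "bij_betw (inv_into {..<K} r) {..<K} {..<K}" using bij_betw_inv_into[OF bij] .
    then show ?thesis by (rule bij_betw_cong[THEN iffD1, rotated]) (simp add: \<pi>_def)
  qed
  have perm: "\<pi> permutes {..<K}"
    by (rule bij_imp_permutes[OF bpi]) (simp add: \<pi>_def)
  have rpi: "r (\<pi> m) = m" if "m < K" for m
    using that bij_betw_inv_into_right[OF bij, of m] by (simp add: \<pi>_def)
  have piK: "\<pi> m < K" if "m < K" for m using bij_betw_apply[OF bpi, of m] that by simp
  have "\<forall>m<K. \<forall>n<K. \<alpha> (\<pi> m) (\<pi> n) = 1 \<longleftrightarrow> m < n"
  proof (intro allI impI iffI)
    fix m n assume m: "m < K" and n: "n < K"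
    { assume "\<alpha> (\<pi> m) (\<pi> n) = 1"
      then show "m < n" using lt[OF piK[OF m] piK[OF n]] rpi m n by simp }
    { assume mn: "m < n"
      show "\<alpha> (\<pi> m) (\<pi> n) = 1"
      proof (rule ccontr)
        assume na: "\<alpha> (\<pi> m) (\<pi> n) \<noteq> 1"
        have "\<pi> m \<noteq> \<pi> n"
        proof
          assume "\<pi> m = \<pi> n" then have "r (\<pi> m) = r (\<pi> n)" by simp
          then show False using rpi[OF m] rpi[OF n] mn by simp
        qed
        then have "\<alpha> (\<pi> n) (\<pi> m) = 1" using other[OF piK[OF m] piK[OF n]] na by blast
        then show False using lt[OF piK[OF n] piK[OF m]] rpi m n mn by simp
      qed }
  qed
  then show ?thesis using perm by blast
qed

lemma P2_to_P1:
  assumes "P2_feasible K w H \<rho>0 \<sigma>2 rstar Pc E Pmax \<zeta> q p \<alpha>"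
  shows "\<exists>\<pi>. P1_feasible K w H \<rho>0 \<sigma>2 rstar Pc E Pmax \<zeta> q p \<pi>"
proof -
  define d where "d = dev_dist H w q"
  define g where "g = chan_gain \<rho>0 H w q"
  have F: "\<forall>k<K.
        p k + Pc \<le> \<zeta> * E k \<and>
        0 \<le> p k \<and> p k \<le> Pmax k \<and>
        log 2 (1 + p k * g k /
                   ((\<Sum>j\<in>{..<K} - {k}. \<alpha> k j * p j * g j) + \<sigma>2)) \<ge> rstar"
    using assms unfolding P2_feasible_def g_def by blast
  have D: "\<forall>k<K. \<forall>j<K. k \<noteq> j \<longrightarrow>
        (d k > d j \<longrightarrow> \<alpha> k j = 0) \<and>
        (d k < d j \<longrightarrow> \<alpha> k j = 1) \<and>
        (d k = d j \<longrightarrow> \<alpha> k j \<in> {0, 1})"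
    using assms unfolding P2_feasible_def d_def by blast
  have b: "\<forall>k<K. \<forall>j<K. k \<noteq> j \<longrightarrow> \<alpha> k j \<in> {0,1}"
  proof (intro allI impI)
    fix k j assume "k < K" "j < K" "k \<noteq> j"
    then have "(d k > d j \<longrightarrow> \<alpha> k j = 0) \<and> (d k < d j \<longrightarrow> \<alpha> k j = 1) \<and> (d k = d j \<longrightarrow> \<alpha> k j \<in> {0, 1})"
      using D by blast
    then show "\<alpha> k j \<in> {0,1}" by (cases "d k < d j"; cases "d k > d j") auto
  qed
  have diag: "\<forall>k<K. \<alpha> k k = 0"
    and anti: "\<forall>k<K. \<forall>j<K. k \<noteq> j \<longrightarrow> \<alpha> k j + \<alpha> j k = 1"
    and tr: "\<forall>k<K. \<forall>j<K. \<forall>i<K. \<alpha> k j + \<alpha> j i - 1 \<le> \<alpha> k i"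
    using assms unfolding P2_feasible_def by blast+
  obtain \<pi> where pi: "\<pi> permutes {..<K}"
    and ord: "\<forall>m<K. \<forall>n<K. \<alpha> (\<pi> m) (\<pi> n) = 1 \<longleftrightarrow> m < n"
    using order_perm[OF b diag anti tr] by blast
  have piK: "\<And>m. m < K \<Longrightarrow> \<pi> m < K" using permutes_in_image[OF pi] by simp
  have pinj: "\<And>m n. \<pi> m = \<pi> n \<Longrightarrow> m = n" using permutes_inj[OF pi] by (simp add: inj_eq)
  have B1: "\<forall>m<K.
        p (\<pi> m) + Pc \<le> \<zeta> * E (\<pi> m) \<and>
        0 \<le> p (\<pi> m) \<and> p (\<pi> m) \<le> Pmax (\<pi> m) \<and>
        log 2 (1 + p (\<pi> m) * g (\<pi> m) /
                   ((\<Sum>n\<in>{m+1..<K}. p (\<pi> n) * g (\<pi> n)) + \<sigma>2)) \<ge> rstar"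
  proof (intro allI impI)
    fix m assume m: "m < K"
    have "(\<Sum>j\<in>{..<K} - {\<pi> m}. \<alpha> (\<pi> m) j * (p j * g j)) = (\<Sum>n\<in>{m+1..<K}. p (\<pi> n) * g (\<pi> n))"
    proof (rule sum_perm_lemma[OF pi m])
      fix n assume n: "n < K" "n \<noteq> m"
      have "\<pi> m \<noteq> \<pi> n" using n pinj[of m n] by auto
      then have "\<alpha> (\<pi> m) (\<pi> n) \<in> {0,1}" using b piK[OF m] piK[OF n(1)] by blast
      then show "\<alpha> (\<pi> m) (\<pi> n) = (if m < n then 1 else 0)" using ord m n by auto
    qed
    then show "p (\<pi> m) + Pc \<le> \<zeta> * E (\<pi> m) \<and>
        0 \<le> p (\<pi> m) \<and> p (\<pi> m) \<le> Pmax (\<pi> m) \<and>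
        log 2 (1 + p (\<pi> m) * g (\<pi> m) /
                   ((\<Sum>n\<in>{m+1..<K}. p (\<pi> n) * g (\<pi> n)) + \<sigma>2)) \<ge> rstar"
      using F[rule_format, OF piK[OF m]] by (simp add: mult.assoc)
  qed
  have B2: "\<forall>m. m + 1 < K \<longrightarrow> d (\<pi> m) \<le> d (\<pi> (m + 1))"
  proof (intro allI impI)
    fix m assume m1: "m + 1 < K"
    have a: "\<alpha> (\<pi> m) (\<pi> (m+1)) = 1" using ord m1 by simp
    have ne: "\<pi> m \<noteq> \<pi> (m+1)" using pinj[of m "m+1"] by auto
    show "d (\<pi> m) \<le> d (\<pi> (m + 1))"
    proof (rule ccontr)
      assume "\<not> ?thesis"
      moreover have "\<pi> m < K" "\<pi> (m+1) < K" using piK m1 by auto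
      ultimately have "\<alpha> (\<pi> m) (\<pi> (m+1)) = 0" using D ne by auto
      then show False using a by simp
    qed
  qed
  show ?thesis
    unfolding P1_feasible_def using pi B1 B2 by (auto simp: d_def g_def)
qed

theorem proposition4:
  fixes K :: nat and w :: "nat \<Rightarrow> real^2"
    and H \<rho>0 \<sigma>2 rstar Pc :: real and E Pmax :: "nat \<Rightarrow> real"
  assumes "K \<ge> 1" and "H > 0" and "\<rho>0 > 0" and "\<sigma>2 > 0" and "rstar > 0" and "Pc \<ge> 0"
    and "\<forall>k<K. E k > 0" and "\<forall>k<K. Pmax k > 0"
  shows "P1_opt K w H \<rho>0 \<sigma>2 rstar Pc E Pmax = P2_opt K w H \<rho>0 \<sigma>2 rstar Pc E Pmax"
proof -
  have "{\<zeta>. \<exists>q p \<pi>. P1_feasible K w H \<rho>0 \<sigma>2 rstar Pc E Pmax \<zeta> q p \<pi>}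
      = {\<zeta>. \<exists>q p \<alpha>. P2_feasible K w H \<rho>0 \<sigma>2 rstar Pc E Pmax \<zeta> q p \<alpha>}"
  proof (intro set_eqI iffI; clarsimp)
    fix \<zeta> q p \<pi> assume "P1_feasible K w H \<rho>0 \<sigma>2 rstar Pc E Pmax \<zeta> q p \<pi>"
    then show "\<exists>q p \<alpha>. P2_feasible K w H \<rho>0 \<sigma>2 rstar Pc E Pmax \<zeta> q p \<alpha>"
      using P1_to_P2 by blast
  next
    fix \<zeta> q p \<alpha> assume "P2_feasible K w H \<rho>0 \<sigma>2 rstar Pc E Pmax \<zeta> q p \<alpha>"
    then show "\<exists>q p \<pi>. P1_feasible K w H \<rho>0 \<sigma>2 rstar Pc E Pmax \<zeta> q p \<pi>"
      using P2_to_P1 by blast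
  qed
  then show ?thesis unfolding P1_opt_def P2_opt_def by simp
qed

end
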